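(* Let $\alpha\in(0,\tfrac12]$ and $X_A,X_B>0$ satisfy $$\sqrt{\tfrac{8\alpha}{1-\alpha}}-\tfrac{2\alpha}{1-\alpha}\le\frac{X_B}{X_A}<\min\Big\{1,\sqrt{\tfrac{1-\alpha}{3\alpha}}\Big\},$$ and suppose the solution function $S$ has exactly one zero $\sigma^*$ in $(0,\infty)$. Then there exists a pre-commitment $p\in[0,X_B]$ by player $B$ to some battlefield $b\in\{1,2\}$ such that $u_B(p)>\pi_B(\sigma^* )$.
   Context: Two-battlefield asymmetric setting: valuations $v_{A,1}=\alpha$, $v_{A,2}=1-\alpha$, $v_{B,1}=1-\alpha$, $v_{B,2}=\alpha$, budgets $X_A,X_B>0$. Define, for $x,y\ge0$, $L(x,y)=\frac{x}{2y}$ if $0\le x\le y$, $y>0$; $L(x,y)=1-\frac{y}{2x}$ if $x>y\ge0$; $L(0,0)=\tfrac12$. Let $c=\frac{(1-\alpha)^2}{\alpha}+\frac{\alpha^2}{1-\alpha}$, $r=X_A/X_B$, and $S:(0,\infty)\to\mathbb R$: $S(\sigma)=\sigma^2(c\sigma-r)$ on $(0,\frac{\alpha}{1-\alpha})$; $S(\sigma)=\frac{\alpha^2}{1-\alpha}(\sigma^3-r)+\alpha\sigma(1-r\sigma)$ on $[\frac{\alpha}{1-\alpha},\frac{1-\alpha}{\alpha})$; $S(\sigma)=\sigma-rc$ on $[\frac{1-\alpha}{\alpha},\infty)$. Player $B$'s equilibrium payoff for a zero $\sigma$: $\pi_B(\sigma)=1-\frac{\sigma}{2}$ if $\sigma\in(0,\frac{\alpha}{1-\alpha})$;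 $\pi_B(\sigma)=1-\alpha-\frac{\alpha\sigma}{2}+\frac{\alpha^2}{2\sigma(1-\alpha)}$ if $\sigma\in[\frac{\alpha}{1-\alpha},\frac{1-\alpha}{\alpha})$; $\pi_B(\sigma)=\frac{c}{2\sigma}$ if $\sigma\ge\frac{1-\alpha}{\alpha}$. Pre-commitment: $B$ places $p\in[0,X_B]$ on one battlefield $b\in\{1,2\}$; $u_A^{M}(p)=v_{A,b}+(1-v_{A,b})L(X_A-p,X_B-p)$ (for $p\le X_A$), $u_A^{W}(p)=(1-v_{A,b})L(X_A,X_B-p)$; $A$'s response is $\mathtt A_b(p)=\mathtt M$ if $p\le X_A$ and $u_A^M(p)>u_A^W(p)$, else $\mathtt A_b(p)=\mathtt W$ (ties go to withdrawing). $B$'s payoff is $u_B(p)=(1-v_{B,b})L(X_B-p,X_A-p)$ if $\mathtt A_b(p)=\mathtt M$ and $u_B(p)=v_{B,b}+(1-v_{B,b})L(X_B-p,X_A)$ if $\mathtt A_b(p)=\mathtt W$. *)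

theory Defs
  imports Complex_Main
begin

definition L :: "real \<Rightarrow> real \<Rightarrow> real" where
  "L x y = (if x = 0 \<and> y = 0 then 1/2
            else if x \<le> y then x / (2*y)
            else 1 - y / (2*x))"

text \<open>Valuations; battlefields are 1 and 2.\<close>
definition vA :: "real \<Rightarrow> nat \<Rightarrow> real" where
  "vA \<alpha> b = (if b = 1 then \<alpha> else 1 - \<alpha>)"

definition vB :: "real \<Rightarrow> nat \<Rightarrow> real" where
  "vB \<alpha> b = (if b = 1 then 1 - \<alpha> else \<alpha>)"

definition cc :: "real \<Rightarrow> real" where
  "cc \<alpha> = (1-\<alpha>)^2/\<alpha> + \<alpha>^2/(1-\<alpha>)"

definition S :: "real \<Rightarrow> real \<Rightarrow> real \<Rightarrow> real \<Rightarrow> real" where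
  "S \<alpha> XA XB \<sigma> =
    (let r = XA / XB in
     if \<sigma> < \<alpha>/(1-\<alpha>) then \<sigma>^2 * (cc \<alpha> * \<sigma> - r)
     else if \<sigma> < (1-\<alpha>)/\<alpha> then \<alpha>^2/(1-\<alpha>) * (\<sigma>^3 - r) + \<alpha>*\<sigma>*(1 - r*\<sigma>)
     else \<sigma> - r * cc \<alpha>)"

definition piB :: "real \<Rightarrow> real \<Rightarrow> real" where
  "piB \<alpha> \<sigma> =
    (if \<sigma> < \<alpha>/(1-\<alpha>) then 1 - \<sigma>/2
     else if \<sigma> < (1-\<alpha>)/\<alpha> then 1 - \<alpha> - \<alpha>*\<sigma>/2 + \<alpha>^2/(2*\<sigma>*(1-\<alpha>))
     else cc \<alpha> / (2*\<sigma>))"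

definition uAM :: "real \<Rightarrow> real \<Rightarrow> real \<Rightarrow> nat \<Rightarrow> real \<Rightarrow> real" where
  "uAM \<alpha> XA XB b p = vA \<alpha> b + (1 - vA \<alpha> b) * L (XA - p) (XB - p)"

definition uAW :: "real \<Rightarrow> real \<Rightarrow> real \<Rightarrow> nat \<Rightarrow> real \<Rightarrow> real" where
  "uAW \<alpha> XA XB b p = (1 - vA \<alpha> b) * L XA (XB - p)"

text \<open>A's response: True = match (M), False = withdraw (W); ties go to W.\<close>
definition A_matches :: "real \<Rightarrow> real \<Rightarrow> real \<Rightarrow> nat \<Rightarrow> real \<Rightarrow> bool" where
  "A_matches \<alpha> XA XB b p \<longleftrightarrow> p \<le> XA \<and> uAM \<alpha> XA XB b p > uAW \<alpha> XA XB b p"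

definition uB :: "real \<Rightarrow> real \<Rightarrow> real \<Rightarrow> nat \<Rightarrow> real \<Rightarrow> real" where
  "uB \<alpha> XA XB b p =
    (if A_matches \<alpha> XA XB b p then (1 - vB \<alpha> b) * L (XB - p) (XA - p)
     else vB \<alpha> b + (1 - vB \<alpha> b) * L (XB - p) XA)"

end

theory Submission imports Defs begin
lemma beta_facts:
  fixes \<beta> t :: real
  assumes b0: "0 < \<beta>" and b1: "\<beta> \<le> 1" and lo: "sqrt (8*\<beta>) - 2*\<beta> \<le> t"
    and t1: "t < 1" and hi: "t < sqrt (1/(3*\<beta>))"
  shows "2*\<beta> \<le> t \<and> \<beta> < 1"
proof -
  define q where "q = sqrt (8*\<beta>)"
  have q0: "q \<ge> 0" and qq: "q^2 = 8*\<beta>" using b0 by (auto simp: q_def)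
  have lo': "q - q^2/4 \<le> t" using lo qq by (simp add: q_def)
  show ?thesis
  proof (cases "q \<le> 2")
    case True
    have "q*q \<le> 2*q" using True q0 by (intro mult_right_mono) auto
    then have "q^2/4 \<le> q - q^2/4" by (simp add: power2_eq_square)
    moreover have "q^2 \<le> 4" using True q0 by (simp add: power2_eq_square) (metis mult_mono' True mult_2_right order_trans add_mono order_refl q0 numeral_Bit0 numeral_One mult.right_neutral one_add_one)
    ultimately show ?thesis using lo' qq by linarith
  next
    case False
    have q8: "q^2 \<le> 8" using qq b1 by simp
    have "q*q \<le> 8" using q8 by (simp add: power2_eq_square)
    have q3: "q \<le> 3"
    proof (rule ccontr)
      assume "\<not> q \<le> 3"
      then have "3*3 < q*q" by (intro mult_strict_mono) auto
      then show False using \<open>q*q \<le> 8\<close> by simp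
    qed
    have "q^2 - q^3/4 - 2 = -(q-2)*(q^2-2*q-4)/4" by (simp add: algebra_simps power2_eq_square power3_eq_cube)
    moreover have "q^2-2*q-4 \<le> 0"
    proof -
      have "q^2 - 2*q - 4 = (q-1)^2 - 5" by (simp add: algebra_simps power2_eq_square)
      moreover have "(q-1)^2 \<le> 2^2" using q3 False by (intro power_mono) auto
      ultimately show ?thesis by simp
    qed
    moreover have "q - 2 > 0" using False by simp
    ultimately have "(q-2)*(q^2-2*q-4) \<le> 0" by (intro mult_nonneg_nonpos) auto
    with \<open>q^2 - q^3/4 - 2 = -(q-2)*(q^2-2*q-4)/4\<close> have key: "q^2 - q^3/4 \<ge> 2" by linarith
    have "q < 4" using q3 by simp
    have pos: "0 < q - q^2/4"
    proof -
      have "q*q < 4*q" using \<open>q<4\<close> False by (intro mult_strict_right_mono) auto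
      then show ?thesis by (simp add: power2_eq_square)
    qed
    have "(q - q^2/4)^2 \<le> t^2" using lo' pos by (intro power_mono) auto
    moreover have "t^2 < 1/(3*\<beta>)"
    proof -
      have "t \<ge> 0" using lo' pos by linarith
      then have "t^2 < (sqrt (1/(3*\<beta>)))^2" using hi by (intro power_strict_mono) auto
      then show ?thesis using b0 by simp
    qed
    ultimately have A: "(q - q^2/4)^2 * (3*\<beta>) < 1"
    proof -
      assume h1: "(q - q^2/4)^2 \<le> t^2" and h2: "t^2 < 1/(3*\<beta>)"
      have "(q - q^2/4)^2 * (3*\<beta>) \<le> t^2 * (3*\<beta>)" using h1 b0 by (intro mult_right_mono) auto
      moreover have "t^2 * (3*\<beta>) < 1" using h2 b0 by (simp add: field_simps)
      ultimately show ?thesis by linarith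
    qed
    have "(q*(q - q^2/4))^2 = (q^2 - q^3/4)^2" by (simp add: algebra_simps power2_eq_square power3_eq_cube)
    moreover have "(q^2 - q^3/4)^2 \<ge> 2^2" using key by (intro power_mono) auto
    ultimately have "(q - q^2/4)^2 * q^2 \<ge> 4" by (simp add: power_mult_distrib mult.commute)
    then have "(q - q^2/4)^2 * (3*\<beta>) \<ge> 3/2" using qq by (simp add: algebra_simps)
    then show ?thesis using A by linarith
  qed
qed

lemma S_ident:
  fixes \<alpha> r :: real assumes "0<\<alpha>" "\<alpha><1"
  shows "\<alpha>^2/(1-\<alpha>)*(((1-\<alpha>)/\<alpha>)^3-r)+\<alpha>*((1-\<alpha>)/\<alpha>)*(1-r*((1-\<alpha>)/\<alpha>))
       = (1-\<alpha>)/\<alpha> - r * cc \<alpha>"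
  using assms unfolding cc_def by (simp add: field_simps power2_eq_square power3_eq_cube)

lemma half_aux: fixes J m :: real shows "J < m \<Longrightarrow> (m + J)/2 < m" by simp

lemma cc_aux:
  fixes a m :: real assumes "0<a" "0<m"
  shows "(m^2/a + a^2/m)/(2*(m/a)) = (m + a^3/m^2)/2"
  using assms by (simp add: field_simps power2_eq_square power3_eq_cube)

theorem theorem3:
  fixes \<alpha> XA XB \<sigma>s :: real
  assumes "0 < \<alpha>" and "\<alpha> \<le> 1/2"
    and "0 < XA" and "0 < XB"
    and "sqrt (8*\<alpha>/(1-\<alpha>)) - 2*\<alpha>/(1-\<alpha>) \<le> XB / XA"
    and "XB / XA < min 1 (sqrt ((1-\<alpha>)/(3*\<alpha>)))"
    and "0 < \<sigma>s" and "S \<alpha> XA XB \<sigma>s = 0"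
    and "\<forall>\<sigma>>0. S \<alpha> XA XB \<sigma> = 0 \<longrightarrow> \<sigma> = \<sigma>s"
  shows "\<exists>b\<in>{1::nat, 2}. \<exists>p\<in>{0..XB}. uB \<alpha> XA XB b p > piB \<alpha> \<sigma>s"
proof -
  note a0 = assms(1) and ah = assms(2) and XA0 = assms(3) and XB0 = assms(4)
  define \<beta> where "\<beta> = \<alpha>/(1-\<alpha>)"
  define t where "t = XB/XA"
  define r where "r = XA/XB"
  have a1: "\<alpha> < 1" using ah by simp
  have b0: "0 < \<beta>" using a0 a1 by (simp add: \<beta>_def)
  have b1: "\<beta> \<le> 1" using ah a0 by (simp add: \<beta>_def field_simps)
  have e1: "8*\<alpha>/(1-\<alpha>) = 8*\<beta>" "2*\<alpha>/(1-\<alpha>) = 2*\<beta>" by (simp_all add: \<beta>_def)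
  have e2: "(1-\<alpha>)/(3*\<alpha>) = 1/(3*\<beta>)" using a0 a1 by (simp add: \<beta>_def field_simps)
  have lo: "sqrt (8*\<beta>) - 2*\<beta> \<le> t" using assms(5) e1 by (simp add: t_def)
  have t1: "t < 1" and hi: "t < sqrt (1/(3*\<beta>))" using assms(6) e2 by (simp_all add: t_def)
  from beta_facts[OF b0 b1 lo t1 hi] have t2b: "2*\<beta> \<le> t" and bl1: "\<beta> < 1" by auto
  have ahs: "\<alpha> < 1/2" using bl1 a0 a1 by (simp add: \<beta>_def field_simps)
  have t0: "0 < t" using XA0 XB0 by (simp add: t_def)
  have r1: "1 < r" using t1 t0 XA0 XB0 by (simp add: t_def r_def field_simps)
  have lt1: "\<alpha>/(1-\<alpha>) < 1" and gt1: "1 < (1-\<alpha>)/\<alpha>" using ahs a0 by (simp_all add: field_simps)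
  define q where "q = (\<lambda>\<sigma>::real. \<alpha>^2/(1-\<alpha>)*(\<sigma>^3-r)+\<alpha>*\<sigma>*(1-r*\<sigma>))"
  have Sq: "S \<alpha> XA XB \<sigma> = q \<sigma>" if "1 \<le> \<sigma>" "\<sigma> < (1-\<alpha>)/\<alpha>" for \<sigma>
    using that lt1 unfolding S_def q_def r_def Let_def by auto
  have S3: "S \<alpha> XA XB \<sigma> = \<sigma> - r * cc \<alpha>" if "(1-\<alpha>)/\<alpha> \<le> \<sigma>" for \<sigma>
    using that lt1 gt1 unfolding S_def r_def Let_def by auto
  have qid: "q ((1-\<alpha>)/\<alpha>) = (1-\<alpha>)/\<alpha> - r * cc \<alpha>" unfolding q_def using S_ident a0 a1 by blast
  have q1: "q 1 < 0"
  proof -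
    have "q 1 = (\<alpha>^2/(1-\<alpha>) + \<alpha>) * (1 - r)" by (simp add: q_def algebra_simps)
    moreover have "\<alpha>^2/(1-\<alpha>) + \<alpha> > 0" using a0 a1 by (intro add_pos_pos divide_pos_pos) auto
    ultimately show ?thesis using r1 by (simp add: mult_pos_neg)
  qed
  obtain z where z1: "1 < z" and zS: "S \<alpha> XA XB z = 0"
  proof (cases "q ((1-\<alpha>)/\<alpha>) \<ge> 0")
    case True
    have "\<exists>x\<ge>1. x \<le> (1-\<alpha>)/\<alpha> \<and> q x = 0"
      by (rule IVT) (use q1 True gt1 in \<open>auto simp: q_def intro!: continuous_intros\<close>)
    then obtain x where x: "1 \<le> x" "x \<le> (1-\<alpha>)/\<alpha>" "q x = 0" by blast
    have "x \<noteq> 1" using x q1 by auto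
    moreover have "S \<alpha> XA XB x = 0"
    proof (cases "x < (1-\<alpha>)/\<alpha>")
      case True then show ?thesis using Sq x by simp
    next
      case False then have "x = (1-\<alpha>)/\<alpha>" using x by simp
      then show ?thesis using S3 qid x by simp
    qed
    ultimately show ?thesis using that x by (metis order_le_less)
  next
    case False
    define z where "z = r * cc \<alpha>"
    have "(1-\<alpha>)/\<alpha> \<le> z" using False qid by (simp add: z_def)
    then have "S \<alpha> XA XB z = 0" using S3 by (simp add: z_def)
    moreover have "1 < z" using \<open>(1-\<alpha>)/\<alpha> \<le> z\<close> gt1 by linarith
    ultimately show ?thesis using that by blast
  qed
  have s1: "1 < \<sigma>s" using assms(9) zS z1 by force
  have pi1: "piB \<alpha> \<sigma>s < 1 - \<alpha>"
  proof (cases "\<sigma>s < (1-\<alpha>)/\<alpha>")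
    case True
    have pe: "piB \<alpha> \<sigma>s = 1 - \<alpha> - \<alpha>*\<sigma>s/2 + \<alpha>^2/(2*\<sigma>s*(1-\<alpha>))"
      using True s1 lt1 unfolding piB_def by auto
    have "\<alpha>^2/(2*\<sigma>s*(1-\<alpha>)) = (\<alpha>/2) * (\<beta>/\<sigma>s)" using a1 s1 by (simp add: \<beta>_def power2_eq_square)
    moreover have "\<beta>/\<sigma>s < 1" using s1 bl1 by simp
    moreover have "(\<alpha>/2) * (\<beta>/\<sigma>s) < (\<alpha>/2) * 1" using \<open>\<beta>/\<sigma>s < 1\<close> a0 by (intro mult_strict_left_mono) auto
    ultimately have "\<alpha>^2/(2*\<sigma>s*(1-\<alpha>)) < \<alpha>/2" by simp
    moreover have "\<alpha>/2 < \<alpha>*\<sigma>s/2" using a0 s1 by simp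
    ultimately show ?thesis using pe by linarith
  next
    case False
    have pe: "piB \<alpha> \<sigma>s = cc \<alpha> / (2*\<sigma>s)" using False s1 lt1 unfolding piB_def by auto
    have cc0: "cc \<alpha> \<ge> 0" using a0 a1 unfolding cc_def by simp
    have "cc \<alpha> / (2*\<sigma>s) \<le> cc \<alpha> / (2*((1-\<alpha>)/\<alpha>))"
    proof (rule divide_left_mono)
      show "2*((1-\<alpha>)/\<alpha>) \<le> 2*\<sigma>s" using False by linarith
      show "0 < 2*\<sigma>s * (2*((1-\<alpha>)/\<alpha>))" using s1 gt1 by (intro mult_pos_pos) auto
    qed (rule cc0)
    moreover have "cc \<alpha> / (2*((1-\<alpha>)/\<alpha>)) < 1-\<alpha>"
    proof -
      have "\<alpha>^3 < (1-\<alpha>)^3" using ahs a0 by (intro power_strict_mono) auto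
      then have "\<alpha>^3/(1-\<alpha>)^2 < (1-\<alpha>)^3/(1-\<alpha>)^2" using a1 by (intro divide_strict_right_mono) auto
      also have "(1-\<alpha>)^3/(1-\<alpha>)^2 = 1-\<alpha>" using a1 by (simp add: power2_eq_square power3_eq_cube)
      finally have h: "\<alpha>^3/(1-\<alpha>)^2 < 1-\<alpha>" .
      have E: "cc \<alpha> / (2*((1-\<alpha>)/\<alpha>)) = ((1-\<alpha>) + \<alpha>^3/(1-\<alpha>)^2)/2"
        using cc_aux[of \<alpha> "1-\<alpha>"] a0 a1 unfolding cc_def by simp
      show ?thesis unfolding E by (rule half_aux[OF h])
    qed
    ultimately show ?thesis using pe by linarith
  qed
  define p where "p = (XB + 2*\<beta>*XA)/2"
  have XBt: "XB = t*XA" using XA0 by (simp add: t_def)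
  have bX: "2*\<beta>*XA \<le> XB" using t2b XA0 XBt by simp
  have XBA: "XB < XA" using t1 XA0 XBt by simp
  have p0: "0 \<le> p" using b0 XA0 XB0 by (simp add: p_def)
  have pB: "p \<le> XB" using bX by (simp add: p_def)
  have pA: "p < XA" using pB XBA by simp
  have sq: "8*\<beta>*XA^2 \<le> (XB + 2*\<beta>*XA)^2"
  proof -
    have "sqrt (8*\<beta>) \<le> t + 2*\<beta>" using lo by simp
    then have "(sqrt (8*\<beta>))^2 \<le> (t + 2*\<beta>)^2" using b0 by (intro power_mono) auto
    then have "8*\<beta> \<le> (t + 2*\<beta>)^2" using b0 by simp
    then have "8*\<beta>*XA^2 \<le> (t + 2*\<beta>)^2 * XA^2" by (intro mult_right_mono) auto
    also have "(t + 2*\<beta>)^2 * XA^2 = (XB + 2*\<beta>*XA)^2" using XBt by (simp add: power2_eq_square algebra_simps)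
    finally show ?thesis .
  qed
  have idp: "(XB-p)*p - 2*\<beta>*XA*(XA-p) = ((XB + 2*\<beta>*XA)^2 - 8*\<beta>*XA^2)/4"
    unfolding p_def power2_eq_square by (simp add: field_simps)
  have key0: "2*\<beta>*XA*(XA-p) \<le> (XB-p)*p" using idp sq by simp
  have ab: "(1-\<alpha>)*\<beta> = \<alpha>" using a1 by (simp add: \<beta>_def)
  have key: "2*\<alpha>*XA*(XA-p) \<le> (1-\<alpha>)*((XB-p)*p)"
  proof -
    have "(1-\<alpha>)*(2*\<beta>*XA*(XA-p)) \<le> (1-\<alpha>)*((XB-p)*p)" using key0 a1 by (intro mult_left_mono) auto
    moreover have "(1-\<alpha>)*(2*\<beta>*XA*(XA-p)) = 2*\<alpha>*XA*(XA-p)"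
    proof -
      have "(1-\<alpha>)*(2*\<beta>*XA*(XA-p)) = 2*((1-\<alpha>)*\<beta>)*XA*(XA-p)" by (simp only: mult_ac)
      then show ?thesis by (simp only: ab)
    qed
    ultimately show ?thesis by simp
  qed
  have L1: "L (XA-p) (XB-p) = 1 - (XB-p)/(2*(XA-p))" using XBA unfolding L_def by auto
  have L2: "L XA (XB-p) = 1 - (XB-p)/(2*XA)" using XBA p0 XA0 unfolding L_def by auto
  have L3: "L (XB-p) XA = (XB-p)/(2*XA)" using XBA pB p0 XA0 unfolding L_def by auto
  have diff: "uAW \<alpha> XA XB 1 p - uAM \<alpha> XA XB 1 p
      = ((1-\<alpha>)*((XB-p)*p) - 2*\<alpha>*XA*(XA-p)) / (2*XA*(XA-p))"
    unfolding uAW_def uAM_def vA_def L1 L2 using pA XA0 by (simp add: field_simps)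
  have "((1-\<alpha>)*((XB-p)*p) - 2*\<alpha>*XA*(XA-p)) / (2*XA*(XA-p)) \<ge> 0"
    using key pA XA0 by (intro divide_nonneg_pos) auto
  then have nm: "\<not> A_matches \<alpha> XA XB 1 p" using diff unfolding A_matches_def by linarith
  have uB1: "uB \<alpha> XA XB 1 p \<ge> 1 - \<alpha>"
  proof -
    have "uB \<alpha> XA XB 1 p = (1-\<alpha>) + \<alpha> * ((XB-p)/(2*XA))"
      using nm unfolding uB_def vB_def L3 by simp
    moreover have "\<alpha> * ((XB-p)/(2*XA)) \<ge> 0" using a0 pB XA0 by simp
    ultimately show ?thesis by linarith
  qed
  have "p \<in> {0..XB}" using p0 pB by simp
  then show ?thesis using uB1 pi1 by force
qed

end
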